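(* Let $\mathcal D$ be an ordered, oriented Descartes configuration whose curvature-center coordinate matrix $M=M_{\mathcal D}$ is an integer matrix, and let $g=\gcd(a_1,a_2,a_3,a_4)$, where $(a_1,a_2,a_3,a_4)^T$ is the first column of $M$ (the signed curvatures). Then the augmented curvature-center coordinate matrix $W_{\mathcal D}$ is an integer matrix if and only if one of the following holds: (i) $g=1$; (ii) $g=2$ and in each row of $M$ the sum of the second and third entries is odd; (iii) $g=4$ and the $4\times2$ matrix formed by the second and third columns of $M$ is congruent modulo $2$ to $\begin{pmatrix}1&0\\1&0\\1&0\\1&0\end{pmatrix}$ or to $\begin{pmatrix}0&1\\0&1\\0&1\\0&1\end{pmatrix}$.
   Context: Circles are taken in $\hat{\mathbb C}=\mathbb R^2\cup\{\infty\}$; lines count as circles. A Descartes configuration is a set of four mutually tangent circles with disjoint interiors; an ordered, oriented one carries an ordering and a total orientation, with signed curvatures $b_i$ (reciprocal radius, negative if the interior is unbounded, $0$ for lines, all reversed for negative orientation). The curvature-center coordinate matrix $M_{\mathcal D}$ is the $4\times 3$ matrix with $i$-th row $(b_i,b_ix_i,b_iy_i)$, $(x_i,y_i)$ the center of the $i$-th circle; the augmented curvature-center coordinate matrix $W_{\mathcal D}$ is the $4\times4$ matrix with $i$-th row $(\bar b_i,b_i,b_ix_i,b_iy_i)$, where $\bar b_i=b_i(x_i^2+y_i^2)-1/b_i$ is the signed curvature of the image of the circle under inversion in the unit circle. For a line the rows are $(0,n_x,n_y)$ and $(2p\cdot n,0,n_x,n_y)$ respectively, with $n$ the unit normal pointing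 into the line's interior half-plane and $p$ any point of the line. *)

theory Defs
  imports Complex_Main
begin

text \<open>Disk c r: circle with centre c, radius r, interior the bounded open disk.
  Compl c r: circle with centre c, radius r, interior the unbounded complement of the closed disk
             (so its signed curvature is negative).
  Line n p: the line through p with unit normal n, interior the open half-plane into which n points.\<close>

datatype circ = Disk "real \<times> real" real | Compl "real \<times> real" real | Line "real \<times> real" "real \<times> real"

fun valid_circ :: "circ \<Rightarrow> bool" where
  "valid_circ (Disk c r) = (r > 0)"
| "valid_circ (Compl c r) = (r > 0)"
| "valid_circ (Line n p) = ((fst n)\<^sup>2 + (snd n)\<^sup>2 = 1)"

definition sqdist :: "real \<times> real \<Rightarrow> real \<times> real \<Rightarrow> real" where
  "sqdist z c = (fst z - fst c)\<^sup>2 + (snd z - snd c)\<^sup>2"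

text \<open>Interior, as a subset of the finite plane (the point at infinity lies only in the
  interiors of Compl-type circles, and two such interiors already meet in the plane).\<close>
fun circ_interior :: "circ \<Rightarrow> (real \<times> real) set" where
  "circ_interior (Disk c r) = {z. sqdist z c < r\<^sup>2}"
| "circ_interior (Compl c r) = {z. sqdist z c > r\<^sup>2}"
| "circ_interior (Line n p) = {z. (fst z - fst p) * fst n + (snd z - snd p) * snd n > 0}"

text \<open>The circle itself as a subset of the extended plane; None is the point at infinity.\<close>
fun circ_points :: "circ \<Rightarrow> (real \<times> real) option set" where
  "circ_points (Disk c r) = Some ` {z. sqdist z c = r\<^sup>2}"
| "circ_points (Compl c r) = Some ` {z. sqdist z c = r\<^sup>2}"
| "circ_points (Line n p) = insert None (Some ` {z. (fst z - fst p) * fst n + (snd z - snd p) * snd n = 0})"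

definition tangent_disjoint :: "circ \<Rightarrow> circ \<Rightarrow> bool" where
  "tangent_disjoint C D \<longleftrightarrow>
     circ_interior C \<inter> circ_interior D = {} \<and> (\<exists>!q. q \<in> circ_points C \<and> q \<in> circ_points D)"

definition descartes_config :: "(nat \<Rightarrow> circ) \<Rightarrow> bool" where
  "descartes_config C \<longleftrightarrow> (\<forall>i<4. valid_circ (C i)) \<and>
     (\<forall>i<4. \<forall>j<4. i \<noteq> j \<longrightarrow> tangent_disjoint (C i) (C j))"

fun M_row :: "circ \<Rightarrow> nat \<Rightarrow> real" where
  "M_row (Disk c r) j = (let b = 1 / r in [b, b * fst c, b * snd c] ! j)"
| "M_row (Compl c r) j = (let b = - 1 / r in [b, b * fst c, b * snd c] ! j)"
| "M_row (Line n p) j = [0, fst n, snd n] ! j"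

fun W_row :: "circ \<Rightarrow> nat \<Rightarrow> real" where
  "W_row (Disk c r) j = (let b = 1 / r in
      [b * ((fst c)\<^sup>2 + (snd c)\<^sup>2) - 1 / b, b, b * fst c, b * snd c] ! j)"
| "W_row (Compl c r) j = (let b = - 1 / r in
      [b * ((fst c)\<^sup>2 + (snd c)\<^sup>2) - 1 / b, b, b * fst c, b * snd c] ! j)"
| "W_row (Line n p) j =
      [2 * (fst p * fst n + snd p * snd n), 0, fst n, snd n] ! j"

text \<open>Orientation: pos = True is the positive orientation; negative orientation reverses all
  signs (curvatures, and correspondingly all rows).\<close>
definition orient_sign :: "bool \<Rightarrow> real" where
  "orient_sign pos = (if pos then 1 else -1)"

definition curv_center_matrix :: "bool \<Rightarrow> (nat \<Rightarrow> circ) \<Rightarrow> nat \<Rightarrow> nat \<Rightarrow> real" where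
  "curv_center_matrix pos C i j = orient_sign pos * M_row (C i) j"

definition aug_curv_center_matrix :: "bool \<Rightarrow> (nat \<Rightarrow> circ) \<Rightarrow> nat \<Rightarrow> nat \<Rightarrow> real" where
  "aug_curv_center_matrix pos C i j = orient_sign pos * W_row (C i) j"

end

theory Submission
  imports Defs "HOL-Analysis.Analysis"
begin


lemma gram_det_zero:
  fixes x0 x1 x2 y0 y1 y2 :: int
  shows "(x0* x0+y0* y0)*(x1* x1+y1* y1)*(x2* x2+y2* y2) + 2*(x0* x1+y0* y1)*(x1* x2+y1* y2)*(x0* x2+y0* y2)
     - (x0* x0+y0* y0)*(x1* x2+y1* y2)^2 - (x1* x1+y1* y1)*(x0* x2+y0* y2)^2 - (x2* x2+y2* y2)*(x0* x1+y0* y1)^2 = 0"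
  by (simp add: algebra_simps power2_eq_square)

lemma E_m:
  fixes m a0 a1 a2 e01 e12 e02 :: int
  defines "p00 \<equiv> 2 + m* a0" and "p11 \<equiv> 2 + m* a1" and "p22 \<equiv> 2 + m* a2"
    and "p01 \<equiv> -2 + m* e01" and "p12 \<equiv> -2 + m* e12" and "p02 \<equiv> -2 + m* e02"
  shows "p00* p11* p22+2* p01* p12* p02-p00* p12^2-p11* p02^2-p22* p01^2 = -32 + m * ((1)* a0* a1* a2* m^2 + (2)* a0* a1* m + (2)* a0* a2* m + (2)* a1* a2* m + (2)* e01* e02* e12* m^2 + (-4)* e01* e12* m + (-4)* e01* e02* m + (16)* e01 + (-4)* e02* e12* m + (16)* e12 + (16)* e02 + (-1)* a0* e12^2* m^2 + (4)* a0* e12* m + (-2)* e12^2* m + (-1)* a1* e02^2* m^2 + (4)* a1* e02* m + (-2)* e02^2* m + (-1)* a2* e01^2* m^2 + (4)* a2* e01* m + (-2)* e01^2* m)"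
  unfolding assms by (simp add: algebra_simps power2_eq_square)

lemma E_8:
  fixes f0 f1 f2 e01 e12 e02 :: int
  defines "p00 \<equiv> 1 + 8* f0" and "p11 \<equiv> 1 + 8* f1" and "p22 \<equiv> 1 + 8* f2"
    and "p01 \<equiv> -1 + 4* e01" and "p12 \<equiv> -1 + 4* e12" and "p02 \<equiv> -1 + 4* e02"
  shows "p00* p11* p22+2* p01* p12* p02-p00* p12^2-p11* p02^2-p22* p01^2 = -4 + 8 * ((64)* f0* f1* f2 + (8)* f0* f1 + (8)* f0* f2 + (8)* f1* f2 + (16)* e01* e02* e12 + (-4)* e01* e12 + (-4)* e01* e02 + (2)* e01 + (-4)* e02* e12 + (2)* e12 + (2)* e02 + (-16)* e12^2* f0 + (8)* e12* f0 + (-2)* e12^2 + (-16)* e02^2* f1 + (8)* e02* f1 + (-2)* e02^2 + (-16)* e01^2* f2 + (8)* e01* f2 + (-2)* e01^2)"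
  unfolding assms by (simp add: algebra_simps power2_eq_square)

lemma div32: fixes g :: int assumes "g dvd 32" "0 \<le> g" "\<not> 8 dvd g" shows "g = 1 \<or> g = 2 \<or> g = 4"
proof -
  have "g \<noteq> 0" using assms by auto
  hence "g \<le> 32" using assms zdvd_imp_le by auto
  hence "g \<in> {1..32}" using assms \<open>g\<noteq>0\<close> by auto
  hence "g \<in> set [1..32]" by simp
  thus ?thesis using assms by (simp add: upto.simps) (elim disjE; simp)
qed



lemma m32:
  fixes b X Y k :: "nat \<Rightarrow> int" and m :: int
  assumes R1: "\<And>i. i<4 \<Longrightarrow> b i * k i = X i^2 + Y i^2 - 1"
  and R2: "\<And>i j. i<4 \<Longrightarrow> j<4 \<Longrightarrow> i\<noteq>j \<Longrightarrow> b i * k j + b j * k i = 2*(X i* X j+Y i* Y j)+2"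
  and dv: "\<And>i. i<4 \<Longrightarrow> m dvd b i"
  shows "m dvd 32"
proof -
  obtain c0 c1 c2 where c: "b 0 = m* c0" "b 1 = m* c1" "b 2 = m* c2"
    using dv[of 0] dv[of 1] dv[of 2] by (auto elim!: dvdE)
  have a: "X i* X i + Y i* Y i = 1 + b i * k i" if "i<4" for i using R1[OF that] by (simp add: power2_eq_square)
  have o: "2*(X i* X j + Y i* Y j) = -2 + (b i * k j + b j * k i)" if "i<4" "j<4" "i\<noteq>j" for i j
    using R2[OF that] by simp
  have h00: "2*(X 0* X 0+Y 0* Y 0) = 2 + m*(2* c0* k 0)" using a[of 0] c by (simp add: algebra_simps)
  have h11: "2*(X 1* X 1+Y 1* Y 1) = 2 + m*(2* c1* k 1)" using a[of 1] c by (simp add: algebra_simps)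
  have h22: "2*(X 2* X 2+Y 2* Y 2) = 2 + m*(2* c2* k 2)" using a[of 2] c by (simp add: algebra_simps)
  have h01: "2*(X 0* X 1+Y 0* Y 1) = -2 + m*(c0* k 1 + c1* k 0)" using o[of 0 1] c by (simp add: algebra_simps)
  have h12: "2*(X 1* X 2+Y 1* Y 2) = -2 + m*(c1* k 2 + c2* k 1)" using o[of 1 2] c by (simp add: algebra_simps)
  have h02: "2*(X 0* X 2+Y 0* Y 2) = -2 + m*(c0* k 2 + c2* k 0)" using o[of 0 2] c by (simp add: algebra_simps)
  define p00 where "p00 = 2*(X 0* X 0+Y 0* Y 0)"
  define p11 where "p11 = 2*(X 1* X 1+Y 1* Y 1)"
  define p22 where "p22 = 2*(X 2* X 2+Y 2* Y 2)"
  define p01 where "p01 = 2*(X 0* X 1+Y 0* Y 1)"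
  define p12 where "p12 = 2*(X 1* X 2+Y 1* Y 2)"
  define p02 where "p02 = 2*(X 0* X 2+Y 0* Y 2)"
  have "p00* p11* p22+2* p01* p12* p02-p00* p12^2-p11* p02^2-p22* p01^2 = 8 * ((X 0* X 0+Y 0* Y 0)*(X 1* X 1+Y 1* Y 1)*(X 2* X 2+Y 2* Y 2) + 2*(X 0* X 1+Y 0* Y 1)*(X 1* X 2+Y 1* Y 2)*(X 0* X 2+Y 0* Y 2)
     - (X 0* X 0+Y 0* Y 0)*(X 1* X 2+Y 1* Y 2)^2 - (X 1* X 1+Y 1* Y 1)*(X 0* X 2+Y 0* Y 2)^2 - (X 2* X 2+Y 2* Y 2)*(X 0* X 1+Y 0* Y 1)^2)"
    unfolding p00_def p11_def p22_def p01_def p12_def p02_def by (simp add: algebra_simps power2_eq_square)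
  also have "\<dots> = 0" using gram_det_zero by simp
  finally have z: "p00* p11* p22+2* p01* p12* p02-p00* p12^2-p11* p02^2-p22* p01^2 = 0" .
  obtain Q where "p00* p11* p22+2* p01* p12* p02-p00* p12^2-p11* p02^2-p22* p01^2 = -32 + m* Q"
    using E_m[of m "2* c0* k 0" "2* c1* k 1" "2* c2* k 2" "c0* k 1 + c1* k 0" "c1* k 2 + c2* k 1" "c0* k 2 + c2* k 0"]
    unfolding p00_def p11_def p22_def p01_def p12_def p02_def h00 h11 h22 h01 h12 h02 by blast
  with z have "32 = m* Q" by simp
  thus ?thesis by (metis dvd_triv_left)
qed

lemma no8:
  fixes b X Y k :: "nat \<Rightarrow> int"
  assumes R1: "\<And>i. i<4 \<Longrightarrow> b i * k i = X i^2 + Y i^2 - 1"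
  and R2: "\<And>i j. i<4 \<Longrightarrow> j<4 \<Longrightarrow> i\<noteq>j \<Longrightarrow> b i * k j + b j * k i = 2*(X i* X j+Y i* Y j)+2"
  and dv: "\<And>i. i<4 \<Longrightarrow> 8 dvd b i"
  shows False
proof -
  obtain c0 c1 c2 where c: "b 0 = 8* c0" "b 1 = 8* c1" "b 2 = 8* c2"
    using dv[of 0] dv[of 1] dv[of 2] by (auto elim!: dvdE)
  have a: "X i* X i + Y i* Y i = 1 + b i * k i" if "i<4" for i using R1[OF that] by (simp add: power2_eq_square)
  have o: "2*(X i* X j + Y i* Y j) = -2 + (b i * k j + b j * k i)" if "i<4" "j<4" "i\<noteq>j" for i j
    using R2[OF that] by simp
  have h00: "(X 0* X 0+Y 0* Y 0) = 1 + 8*(c0* k 0)" using a[of 0] c by (simp add: algebra_simps)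
  have h11: "(X 1* X 1+Y 1* Y 1) = 1 + 8*(c1* k 1)" using a[of 1] c by (simp add: algebra_simps)
  have h22: "(X 2* X 2+Y 2* Y 2) = 1 + 8*(c2* k 2)" using a[of 2] c by (simp add: algebra_simps)
  have h01: "(X 0* X 1+Y 0* Y 1) = -1 + 4*(c0* k 1 + c1* k 0)" using o[of 0 1] c by (simp add: algebra_simps)
  have h12: "(X 1* X 2+Y 1* Y 2) = -1 + 4*(c1* k 2 + c2* k 1)" using o[of 1 2] c by (simp add: algebra_simps)
  have h02: "(X 0* X 2+Y 0* Y 2) = -1 + 4*(c0* k 2 + c2* k 0)" using o[of 0 2] c by (simp add: algebra_simps)
  obtain Q where "(X 0* X 0+Y 0* Y 0)*(X 1* X 1+Y 1* Y 1)*(X 2* X 2+Y 2* Y 2) + 2*(X 0* X 1+Y 0* Y 1)*(X 1* X 2+Y 1* Y 2)*(X 0* X 2+Y 0* Y 2)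
     - (X 0* X 0+Y 0* Y 0)*(X 1* X 2+Y 1* Y 2)^2 - (X 1* X 1+Y 1* Y 1)*(X 0* X 2+Y 0* Y 2)^2 - (X 2* X 2+Y 2* Y 2)*(X 0* X 1+Y 0* Y 1)^2 = -4 + 8* Q"
    using E_8[of "c0* k 0" "c1* k 1" "c2* k 2" "c0* k 1 + c1* k 0" "c1* k 2 + c2* k 1" "c0* k 2 + c2* k 0"]
    unfolding h00 h11 h22 h01 h12 h02 by blast
  with gram_det_zero have "0 = -4 + 8* Q" by simp
  thus False by presburger
qed



lemma suff_core:
  fixes b X Y u :: "nat \<Rightarrow> int" and bb :: "nat \<Rightarrow> real" and g :: int
  assumes gpos: "g > 0"
  and bez: "u 0* b 0 + u 1* b 1 + u 2* b 2 + u 3* b 3 = g"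
  and dvb: "\<And>i. i<4 \<Longrightarrow> g dvd b i"
  and dvK: "\<And>i. i<4 \<Longrightarrow> g dvd (X i^2+Y i^2-1)"
  and dvO: "\<And>i j. i<4 \<Longrightarrow> j<4 \<Longrightarrow> i\<noteq>j \<Longrightarrow> g dvd 2*(X i* X j+Y i* Y j)+2"
  and R1: "\<And>i. i<4 \<Longrightarrow> of_int (b i) * bb i = of_int (X i^2+Y i^2-1)"
  and R2: "\<And>i j. i<4 \<Longrightarrow> j<4 \<Longrightarrow> i\<noteq>j \<Longrightarrow> of_int (b i) * bb j + of_int (b j) * bb i = of_int (2*(X i* X j+Y i* Y j)+2)"
  and i: "i < 4"
  shows "bb i \<in> \<int>"
proof -
  define N where "N i j = (if i=j then 2*(X i^2+Y i^2-1) else 2*(X i* X j+Y i* Y j)+2)" for i j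
  have hN: "of_int (b i)* bb j + of_int (b j)* bb i = of_int (N i j)" if "i<4" "j<4" for i j
  proof (cases "i=j")
    case True thus ?thesis using R1[OF that(1)] by (simp add: N_def)
  next
    case False thus ?thesis using R2[OF that False] by (simp add: N_def)
  qed
  have dN: "g dvd N i j" if "i<4" "j<4" for i j
  proof (cases "i=j")
    case True
    have "N i j = 2*(X i^2+Y i^2-1)" using True by (simp add: N_def)
    thus ?thesis using dvd_mult[OF dvK[OF that(1)], of 2] by simp
  next
    case False
    have "N i j = 2*(X i* X j+Y i* Y j)+2" using False by (simp add: N_def)
    thus ?thesis using dvO[OF that False] by simp
  qed
  have dN2: "2* g dvd N i i" if "i<4" for i
  proof -
    have "N i i = 2*(X i^2+Y i^2-1)" by (simp add: N_def)
    thus ?thesis using mult_dvd_mono[OF dvd_refl[of 2] dvK[OF that]] by simp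
  qed
  have Nsym: "N i j = N j i" for i j by (simp add: N_def algebra_simps)
  define T where "T = of_int (u 0) * bb 0 + of_int (u 1) * bb 1 + of_int (u 2) * bb 2 + of_int (u 3) * bb 3"
  define S where "S = u 0^2* N 0 0 + u 1^2* N 1 1 + u 2^2* N 2 2 + u 3^2* N 3 3
     + 2*(u 0* u 1* N 0 1 + u 0* u 2* N 0 2 + u 0* u 3* N 0 3 + u 1* u 2* N 1 2 + u 1* u 3* N 1 3 + u 2* u 3* N 2 3)"
  have "of_int S = of_int (u 0)^2*(of_int (N 0 0)) + of_int (u 1)^2*(of_int (N 1 1)) + of_int (u 2)^2*(of_int (N 2 2)) + of_int (u 3)^2*(of_int (N 3 3))
     + 2*(of_int (u 0)* of_int (u 1)*(of_int (N 0 1)) + of_int (u 0)* of_int (u 2)*(of_int (N 0 2)) + of_int (u 0)* of_int (u 3)*(of_int (N 0 3)) + of_int (u 1)* of_int (u 2)*(of_int (N 1 2)) + of_int (u 1)* of_int (u 3)*(of_int (N 1 3)) + of_int (u 2)* of_int (u 3)*(of_int (N 2 3)))"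
    unfolding S_def by simp
  also have "\<dots> = of_int (u 0)^2*(of_int (b 0)* bb 0 + of_int (b 0)* bb 0) + of_int (u 1)^2*(of_int (b 1)* bb 1 + of_int (b 1)* bb 1) + of_int (u 2)^2*(of_int (b 2)* bb 2 + of_int (b 2)* bb 2) + of_int (u 3)^2*(of_int (b 3)* bb 3 + of_int (b 3)* bb 3)
     + 2*(of_int (u 0)* of_int (u 1)*(of_int (b 0)* bb 1 + of_int (b 1)* bb 0) + of_int (u 0)* of_int (u 2)*(of_int (b 0)* bb 2 + of_int (b 2)* bb 0) + of_int (u 0)* of_int (u 3)*(of_int (b 0)* bb 3 + of_int (b 3)* bb 0) + of_int (u 1)* of_int (u 2)*(of_int (b 1)* bb 2 + of_int (b 2)* bb 1) + of_int (u 1)* of_int (u 3)*(of_int (b 1)* bb 3 + of_int (b 3)* bb 1) + of_int (u 2)* of_int (u 3)*(of_int (b 2)* bb 3 + of_int (b 3)* bb 2))"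
    by (simp only: hN; simp)
  also have "\<dots> = 2 * of_int (u 0* b 0 + u 1* b 1 + u 2* b 2 + u 3* b 3) * T"
    unfolding T_def by (simp add: algebra_simps power2_eq_square)
  finally have ST: "of_int S = 2 * of_int g * T" by (simp only: bez)
  have "2* g dvd S"
    unfolding S_def
    by (intro dvd_add dvd_mult dN2 mult_dvd_mono dN) auto
  then obtain s where s: "S = 2* g* s" by (elim dvdE)
  have Ts: "T = of_int s" using ST s gpos by simp
  define Z where "Z = u 0 * N i 0 + u 1 * N i 1 + u 2 * N i 2 + u 3 * N i 3"
  have "of_int Z = u 0 * (of_int (b i)* bb 0 + of_int (b 0)* bb i) + u 1 * (of_int (b i)* bb 1 + of_int (b 1)* bb i)
     + of_int (u 2) * (of_int (b i)* bb 2 + of_int (b 2)* bb i) + of_int (u 3) * (of_int (b i)* bb 3 + of_int (b 3)* bb i)"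
    unfolding Z_def using hN[OF i] by simp
  also have "\<dots> = of_int (b i) * T + of_int (u 0* b 0 + u 1* b 1 + u 2* b 2 + u 3* b 3) * bb i"
    unfolding T_def by (simp add: algebra_simps)
  finally have "of_int Z = of_int (b i) * T + of_int g * bb i" by (simp only: bez)
  hence "of_int g * bb i = of_int (Z - b i * s)" using Ts by simp
  moreover have "g dvd Z - b i * s" unfolding Z_def
    using dN[OF i] dvb[OF i] by (intro dvd_diff dvd_add dvd_mult dvd_mult2) auto
  then obtain z where "Z - b i * s = g * z" by (elim dvdE)
  ultimately have "bb i = of_int z" using gpos by (simp add: field_simps)
  thus ?thesis by simp
qed



lemma par2: fixes x y :: int shows "even (x^2+y^2-1) \<longleftrightarrow> odd (x+y)"
  by (simp add: power2_eq_square)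

lemma par4: fixes x y :: int
  shows "4 dvd (x^2+y^2-1) \<longleftrightarrow> (odd x \<and> even y) \<or> (even x \<and> odd y)"
proof (cases "even x"; cases "even y")
  assume "even x" "even y"
  then obtain a c where "x = 2* a" "y = 2* c" by (auto elim!: evenE)
  hence "x^2+y^2-1 = 4*(a* a+c* c) - 1" by (simp add: algebra_simps power2_eq_square)
  moreover have "\<not> 4 dvd 4* t - 1" for t :: int by presburger
  ultimately have "\<not> 4 dvd x^2+y^2-1" by metis
  thus ?thesis using \<open>even x\<close> \<open>even y\<close> by simp
next
  assume "even x" "odd y"
  then obtain a c where "x = 2* a" "y = 2* c+1" by (auto elim!: evenE oddE)
  hence "x^2+y^2-1 = 4*(a* a+c* c+c)" by (simp add: algebra_simps power2_eq_square)
  thus ?thesis using \<open>even x\<close> \<open>odd y\<close> by simp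
next
  assume "odd x" "even y"
  then obtain a c where "x = 2* a+1" "y = 2* c" by (auto elim!: evenE oddE)
  hence "x^2+y^2-1 = 4*(a* a+a+c* c)" by (simp add: algebra_simps power2_eq_square)
  thus ?thesis using \<open>odd x\<close> \<open>even y\<close> by simp
next
  assume "odd x" "odd y"
  then obtain a c where "x = 2* a+1" "y = 2* c+1" by (auto elim!: oddE)
  hence "x^2+y^2-1 = 4*(a* a+a+c* c+c) + 1" by (simp add: algebra_simps power2_eq_square)
  moreover have "\<not> 4 dvd 4* t + 1" for t :: int by presburger
  ultimately have "\<not> 4 dvd x^2+y^2-1" by metis
  thus ?thesis using \<open>odd x\<close> \<open>odd y\<close> by simp
qed

lemma four_off: fixes s :: int shows "4 dvd 2* s+2 \<longleftrightarrow> odd s" by presburger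

lemma nt_main:
  fixes b X Y :: "nat \<Rightarrow> int" and bb :: "nat \<Rightarrow> real"
  assumes R1: "\<And>i. i<4 \<Longrightarrow> of_int (b i) * bb i = of_int (X i^2+Y i^2-1)"
  and R2: "\<And>i j. i<4 \<Longrightarrow> j<4 \<Longrightarrow> i\<noteq>j \<Longrightarrow> of_int (b i) * bb j + of_int (b j) * bb i = of_int (2*(X i* X j+Y i* Y j)+2)"
  defines "g \<equiv> gcd (gcd (b 0) (b 1)) (gcd (b 2) (b 3))"
  shows "(\<forall>i<4. bb i \<in> \<int>) \<longleftrightarrow> (g = 1 \<or> (g=2 \<and> (\<forall>i<4. odd (X i + Y i)))
     \<or> (g=4 \<and> ((\<forall>i<4. odd (X i) \<and> even (Y i)) \<or> (\<forall>i<4. even (X i) \<and> odd (Y i)))))"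
    (is "?L \<longleftrightarrow> ?R")
proof -
  have less4: "i < 4 \<longleftrightarrow> i = 0 \<or> i = 1 \<or> i = 2 \<or> i = 3" for i :: nat by auto
  have g0: "g dvd b 0" "g dvd b 1" "g dvd b 2" "g dvd b 3" unfolding g_def
    by (meson dvd_trans gcd_dvd1 gcd_dvd2)+
  have gdvd: "g dvd b i" if "i<4" for i
    using that g0 unfolding less4 by auto
  show ?thesis
  proof
    assume L: ?L
    define k where "k i = (THE z. bb i = of_int z)" for i
    have kk: "bb i = of_int (k i)" if "i<4" for i
    proof -
      from L that obtain z where "bb i = of_int z" by (auto elim!: Ints_cases)
      thus ?thesis unfolding k_def by simp
    qed
    have I1: "b i * k i = X i^2 + Y i^2 - 1" if "i<4" for i
    proof -
      have "(of_int (b i * k i) :: real) = of_int (X i^2 + Y i^2 - 1)"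
        using R1[OF that] unfolding kk[OF that] by simp
      thus ?thesis by (simp only: of_int_eq_iff)
    qed
    have I2: "b i * k j + b j * k i = 2*(X i* X j+Y i* Y j)+2" if "i<4" "j<4" "i\<noteq>j" for i j
    proof -
      have "(of_int (b i * k j + b j * k i) :: real) = of_int (2*(X i* X j+Y i* Y j)+2)"
        using R2[OF that] unfolding kk[OF that(1)] kk[OF that(2)] by simp
      thus ?thesis by (simp only: of_int_eq_iff)
    qed
    have "g dvd 32" by (rule m32[OF I1 I2 gdvd])
    moreover have "\<not> 8 dvd g"
    proof
      assume "8 dvd g"
      hence "8 dvd b i" if "i<4" for i using gdvd[OF that] by (rule dvd_trans)
      from no8[OF I1 I2 this] show False .
    qed
    moreover have "0 \<le> g" unfolding g_def by simp
    ultimately have g124: "g = 1 \<or> g = 2 \<or> g = 4" using div32 by blast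
    have D: "g dvd X i^2 + Y i^2 - 1" if "i<4" for i
      unfolding I1[OF that, symmetric] by (rule dvd_mult2[OF gdvd[OF that]])
    have D2: "g dvd 2*(X i* X j+Y i* Y j)+2" if "i<4" "j<4" "i\<noteq>j" for i j
      unfolding I2[OF that, symmetric] by (intro dvd_add dvd_mult2 gdvd that)
    show ?R
    proof -
      { assume g2: "g = 2"
        have "odd (X i + Y i)" if "i<4" for i using D[OF that] g2 par2 by simp
        hence ?R using g2 by blast }
      moreover
      { assume g4: "g = 4"
        have P: "(odd (X i) \<and> even (Y i)) \<or> (even (X i) \<and> odd (Y i))" if "i<4" for i
          using D[OF that] g4 par4 by simp
        have O: "odd (X i* X j+Y i* Y j)" if "i<4" "j<4" "i\<noteq>j" for i j
        proof -
          have "4 dvd 2*(X i* X j+Y i* Y j)+2" using D2[OF that] g4 by (simp only:)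
          thus ?thesis using four_off by blast
        qed
        have "(\<forall>i<4. odd (X i) \<and> even (Y i)) \<or> (\<forall>i<4. even (X i) \<and> odd (Y i))"
        proof (cases "odd (X 0) \<and> even (Y 0)")
          case True
          { fix i :: nat assume i: "i<4"
            have "odd (X i) \<and> even (Y i)"
            proof (cases "i = 0")
              case False
              from O[of 0 i] i False have "odd (X 0* X i+Y 0* Y i)" by simp
              have "\<not> (even (X i) \<and> odd (Y i))"
              proof
                assume "even (X i) \<and> odd (Y i)"
                hence "even (X 0* X i+Y 0* Y i)" using True by simp
                thus False using \<open>odd (X 0* X i+Y 0* Y i)\<close> by simp
              qed
              thus ?thesis using P[OF i] by blast
            qed (use True in simp) }
          thus ?thesis by blast
        next
          case False
          moreover have "(0::nat) < 4" by simp
          ultimately have F: "even (X 0) \<and> odd (Y 0)" using P by blast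
          { fix i :: nat assume i: "i<4"
            have "even (X i) \<and> odd (Y i)"
            proof (cases "i = 0")
              case False
              from O[of 0 i] i False have "odd (X 0* X i+Y 0* Y i)" by simp
              have "\<not> (odd (X i) \<and> even (Y i))"
              proof
                assume "odd (X i) \<and> even (Y i)"
                hence "even (X 0* X i+Y 0* Y i)" using F by simp
                thus False using \<open>odd (X 0* X i+Y 0* Y i)\<close> by simp
              qed
              thus ?thesis using P[OF i] by blast
            qed (use F in simp) }
          thus ?thesis by blast
        qed
        hence ?R using g4 by blast }
      ultimately show ?R using g124 by blast
    qed
  next
    assume R: ?R
    have gpos: "g > 0" using R by auto
    obtain u1 v1 where e1: "u1 * b 0 + v1 * b 1 = gcd (b 0) (b 1)" using bezout_int by blast
    obtain u2 v2 where e2: "u2 * b 2 + v2 * b 3 = gcd (b 2) (b 3)" using bezout_int by blast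
    obtain u3 v3 where e3: "u3 * gcd (b 0) (b 1) + v3 * gcd (b 2) (b 3) = g" using bezout_int unfolding g_def by blast
    define u where "u = (\<lambda>i::nat. if i = 0 then u3* u1 else if i = 1 then u3* v1 else if i = 2 then v3* u2 else v3* v2)"
    have bez: "u 0* b 0 + u 1* b 1 + u 2* b 2 + u 3* b 3 = g"
      using e3 unfolding u_def e1[symmetric] e2[symmetric] by (simp add: algebra_simps)
    have dvK: "g dvd (X i^2+Y i^2-1)" if "i<4" for i
    proof -
      { assume "g = 1" hence ?thesis by simp }
      moreover
      { assume g2: "g = 2" "\<forall>i<4. odd (X i + Y i)"
        hence "odd (X i + Y i)" using that by blast
        hence ?thesis using g2 par2[of "X i" "Y i"] by simp }
      moreover
      { assume g4: "g = 4" "(\<forall>i<4. odd (X i) \<and> even (Y i)) \<or> (\<forall>i<4. even (X i) \<and> odd (Y i))"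
        hence "(odd (X i) \<and> even (Y i)) \<or> (even (X i) \<and> odd (Y i))" using that by blast
        hence ?thesis using g4 par4[of "X i" "Y i"] by simp }
      ultimately show ?thesis using R by blast
    qed
    have dvO: "g dvd 2*(X i* X j+Y i* Y j)+2" if "i<4" "j<4" "i\<noteq>j" for i j
    proof -
      { assume "g = 1" hence ?thesis by simp }
      moreover
      { assume g2: "g = 2" hence ?thesis by simp }
      moreover
      { assume g4: "g = 4" and A: "\<forall>i<4. odd (X i) \<and> even (Y i)"
        hence "odd (X i* X j+Y i* Y j)" using that by simp
        hence "4 dvd 2*(X i* X j+Y i* Y j)+2" using four_off by blast
        hence ?thesis using g4 by (simp only:) }
      moreover
      { assume g4: "g = 4" and A: "\<forall>i<4. even (X i) \<and> odd (Y i)"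
        hence "odd (X i* X j+Y i* Y j)" using that by simp
        hence "4 dvd 2*(X i* X j+Y i* Y j)+2" using four_off by blast
        hence ?thesis using g4 by (simp only:) }
      ultimately show ?thesis using R by blast
    qed
    show ?L using suff_core[OF gpos bez gdvd dvK dvO R1 R2] by blast
  qed
qed



lemma sqdist_eq: "sqdist z c = (dist z c)^2"
  by (cases z, cases c) (simp add: sqdist_def dist_Pair_Pair dist_real_def)

lemma lin_eq: "(fst z - fst p) * fst n + (snd z - snd p) * snd n = inner (z - p) n"
  by (cases z, cases p, cases n) simp

lemma sq_lt: fixes a b :: real assumes "0 \<le> a" "0 \<le> b" shows "a^2 < b^2 \<longleftrightarrow> a < b"
  by (metis abs_le_square_iff abs_of_nonneg assms not_le)

lemma sq_eq: fixes a b :: real assumes "0 \<le> a" "0 \<le> b" shows "a^2 = b^2 \<longleftrightarrow> a = b"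
  using assms by (metis abs_of_nonneg power2_eq_iff_nonneg)

lemma norm_unit: fixes n :: "real \<times> real" assumes "(fst n)^2 + (snd n)^2 = 1" shows "norm n = 1"
proof -
  have "(dist n 0)^2 = 1^2" using assms sqdist_eq[of n 0] by (simp add: sqdist_def)
  hence "dist n 0 = 1" using sq_eq[of "dist n 0" 1] by simp
  thus ?thesis by simp
qed

lemma in_disk: "r > 0 \<Longrightarrow> z \<in> circ_interior (Disk c r) \<longleftrightarrow> dist z c < r"
  by (simp add: sqdist_eq sq_lt)

lemma in_compl: "r > 0 \<Longrightarrow> z \<in> circ_interior (Compl c r) \<longleftrightarrow> dist z c > r"
  by (simp add: sqdist_eq sq_lt)

lemma in_line: "z \<in> circ_interior (Line n p) \<longleftrightarrow> inner (z - p) n > 0"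
  by (simp add: lin_eq)

lemma td_disj: "tangent_disjoint C D \<Longrightarrow> z \<in> circ_interior C \<Longrightarrow> z \<in> circ_interior D \<Longrightarrow> False"
  unfolding tangent_disjoint_def by blast

lemma td_common: "tangent_disjoint C D \<Longrightarrow> \<exists>q. q \<in> circ_points C \<and> q \<in> circ_points D"
  unfolding tangent_disjoint_def by blast

lemma td_sym: "tangent_disjoint C D \<Longrightarrow> tangent_disjoint D C"
  unfolding tangent_disjoint_def by (simp add: Int_commute conj_commute)

lemma on_disk: "r > 0 \<Longrightarrow> Some z \<in> circ_points (Disk c r) \<longleftrightarrow> dist z c = r"
  by (auto simp add: sqdist_eq sq_eq)
lemma on_compl: "r > 0 \<Longrightarrow> Some z \<in> circ_points (Compl c r) \<longleftrightarrow> dist z c = r"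
  by (auto simp add: sqdist_eq sq_eq)
lemma on_line: "Some z \<in> circ_points (Line n p) \<longleftrightarrow> inner (z - p) n = 0"
  by (auto simp add: lin_eq)

lemma DD_dist:
  assumes r: "r > 0" and s: "s > 0" and td: "tangent_disjoint (Disk c r) (Disk d s)"
  shows "dist c d = r + s"
proof (rule antisym)
  obtain q where q: "q \<in> circ_points (Disk c r)" "q \<in> circ_points (Disk d s)" using td_common[OF td] by blast
  then obtain z where z: "q = Some z" by auto
  have "dist z c = r" "dist z d = s" using q on_disk r s z by auto
  thus "dist c d \<le> r + s" using dist_triangle[of c d z] by (simp add: dist_commute)
next
  show "r + s \<le> dist c d"
  proof (rule ccontr)
    assume "\<not> r + s \<le> dist c d"
    hence lt: "dist c d < r + s" by simp
    define k where "k = r / (r+s)"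
    define z where "z = c + k *\<^sub>R (d - c)"
    have k0: "0 < k" "k < 1" using r s by (auto simp: k_def field_simps)
    have "dist z c = k * dist c d" using k0 by (simp add: z_def dist_norm dist_commute norm_minus_commute)
    also have "\<dots> < k * (r+s)" using k0 lt by simp
    also have "\<dots> = r" using r s by (simp add: k_def)
    finally have 1: "dist z c < r" .
    have "z - d = (1 - k) *\<^sub>R (c - d)" by (simp add: z_def algebra_simps)
    hence "dist z d = (1-k) * dist c d" using k0 by (simp add: dist_norm)
    also have "\<dots> < (1-k) * (r+s)" using k0 lt by simp
    also have "\<dots> = s" using r s by (simp add: k_def field_simps)
    finally have 2: "dist z d < s" .
    show False using td_disj[OF td, of z] 1 2 in_disk r s by auto
  qed
qed


lemma unit_dir: fixes c d :: "real \<times> real"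
  obtains e where "norm e = 1" "c - d = dist c d *\<^sub>R e"
proof (cases "c = d")
  case True
  show ?thesis by (rule that[of "(1,0)"]) (simp_all add: True zero_prod_def)
next
  case False
  hence "dist c d > 0" by simp
  show ?thesis by (rule that[of "(1 / dist c d) *\<^sub>R (c - d)"])
    (use \<open>dist c d > 0\<close> in \<open>simp_all add: dist_norm\<close>)
qed

lemma DC_dist:
  assumes r: "r > 0" and R: "R > 0" and td: "tangent_disjoint (Disk c r) (Compl d R)"
  shows "dist c d = R - r"
proof (rule antisym)
  obtain q where q: "q \<in> circ_points (Disk c r)" "q \<in> circ_points (Compl d R)" using td_common[OF td] by blast
  then obtain z where z: "q = Some z" by auto
  have "dist z c = r" "dist z d = R" using q on_disk on_compl r R z by auto
  thus "R - r \<le> dist c d" using dist_triangle[of z d c] by (simp add: dist_commute)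
next
  show "dist c d \<le> R - r"
  proof (rule ccontr)
    assume "\<not> dist c d \<le> R - r"
    hence lt: "R - dist c d < r" by simp
    obtain e where e: "norm e = 1" "c - d = dist c d *\<^sub>R e" by (rule unit_dir[of c d])
    define t where "t = (r + max (R - dist c d) 0) / 2"
    have t: "0 \<le> t" "t < r" "R - dist c d < t" using lt r by (auto simp: t_def)
    define z where "z = c + t *\<^sub>R e"
    have 1: "dist z c < r" using t e(1) by (simp add: z_def dist_norm)
    have "z - d = (c - d) + t *\<^sub>R e" by (simp add: z_def algebra_simps)
    also have "\<dots> = (dist c d + t) *\<^sub>R e" by (simp only: e(2) scaleR_add_left)
    finally have "z - d = (dist c d + t) *\<^sub>R e" .
    hence "dist z d = norm ((dist c d + t) *\<^sub>R e)" by (simp add: dist_norm)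
    hence "dist z d = dist c d + t" using e(1) t zero_le_dist[of c d] by simp
    hence 2: "dist z d > R" using t by simp
    show False using td_disj[OF td, of z] 1 2 in_disk in_compl r R by auto
  qed
qed

lemma CC_false:
  assumes r: "r > 0" and R: "R > 0" and td: "tangent_disjoint (Compl c r) (Compl d R)"
  shows False
proof -
  define t where "t = r + R + dist c d + 1"
  define z where "z = c + t *\<^sub>R (1::real, 0::real)"
  have 1: "dist z c = t" using r R zero_le_dist[of c d] by (simp add: z_def dist_norm t_def)
  have "dist z c \<le> dist z d + dist d c" by (rule dist_triangle)
  hence 2: "dist z d > R" using 1 r zero_le_dist[of c d] unfolding t_def by (simp add: dist_commute)
  have "dist z c > r" using 1 R zero_le_dist[of c d] unfolding t_def by linarith
  thus False using td_disj[OF td, of z] 2 in_compl r R by auto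
qed

lemma CL_false:
  assumes R: "R > 0" and n: "(fst n)^2 + (snd n)^2 = 1" and td: "tangent_disjoint (Compl c R) (Line n p)"
  shows False
proof -
  have nn: "inner n n = 1" using norm_unit[OF n] by (simp add: power2_norm_eq_inner[symmetric])
  define t where "t = R + dist p c + 1"
  define z where "z = p + t *\<^sub>R n"
  have 1: "dist z p = t" using norm_unit[OF n] R by (simp add: z_def dist_norm t_def)
  have "dist z p \<le> dist z c + dist c p" by (rule dist_triangle)
  hence 2: "dist z c > R" using 1 R zero_le_dist[of p c] unfolding t_def by (simp add: dist_commute)
  have "inner (z - p) n = t" using nn by (simp add: z_def)
  hence "inner (z - p) n > 0" using R zero_le_dist[of p c] unfolding t_def by linarith
  thus False using td_disj[OF td, of z] 2 in_compl in_line R by auto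
qed

lemma DL_h:
  assumes r: "r > 0" and n: "(fst n)^2 + (snd n)^2 = 1" and td: "tangent_disjoint (Disk c r) (Line n p)"
  shows "inner (c - p) n = - r"
proof (rule antisym)
  have nn: "inner n n = 1" using norm_unit[OF n] by (simp add: power2_norm_eq_inner[symmetric])
  show "inner (c - p) n \<le> - r"
  proof (rule ccontr)
    assume "\<not> inner (c - p) n \<le> - r"
    hence lt: "- inner (c - p) n < r" by simp
    define t where "t = (r + max (- inner (c - p) n) 0) / 2"
    have t: "0 \<le> t" "t < r" "- inner (c - p) n < t" using lt r by (auto simp: t_def)
    define z where "z = c + t *\<^sub>R n"
    have 1: "dist z c < r" using t norm_unit[OF n] by (simp add: z_def dist_norm)
    have "inner (z - p) n = inner (c - p) n + t * inner n n"
      by (simp add: z_def inner_diff_left inner_add_left algebra_simps)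
    hence "inner (z - p) n = inner (c - p) n + t" using nn by simp
    hence 2: "inner (z - p) n > 0" using t by simp
    show False using td_disj[OF td, of z] 1 2 in_disk in_line r by auto
  qed
next
  obtain q where q: "q \<in> circ_points (Disk c r)" "q \<in> circ_points (Line n p)" using td_common[OF td] by blast
  then obtain z where z: "q = Some z" by auto
  have zc: "dist z c = r" and zl: "inner (z - p) n = 0" using q on_disk on_line r z by auto
  have "inner (c - p) n = inner (c - z) n + inner (z - p) n" by (simp add: inner_diff_left)
  hence "inner (c - p) n = inner (c - z) n" using zl by simp
  moreover have "\<bar>inner (c - z) n\<bar> \<le> norm (c - z) * norm n" by (rule Cauchy_Schwarz_ineq2)
  moreover have "norm (c - z) = r" using zc by (simp add: dist_norm norm_minus_commute)
  ultimately show "- r \<le> inner (c - p) n" using norm_unit[OF n] by simp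
qed

lemma LL_h:
  assumes n: "(fst n)^2 + (snd n)^2 = 1" and m: "(fst m)^2 + (snd m)^2 = 1"
    and td: "tangent_disjoint (Line n p) (Line m q)"
  shows "inner n m = - 1"
proof (rule antisym)
  have nn: "inner n n = 1" using norm_unit[OF n] by (simp add: power2_norm_eq_inner[symmetric])
  have mm: "inner m m = 1" using norm_unit[OF m] by (simp add: power2_norm_eq_inner[symmetric])
  have "\<bar>inner n m\<bar> \<le> norm n * norm m" by (rule Cauchy_Schwarz_ineq2)
  thus "- 1 \<le> inner n m" using norm_unit[OF n] norm_unit[OF m] by simp
  show "inner n m \<le> - 1"
  proof (rule ccontr)
    assume "\<not> inner n m \<le> - 1"
    hence a: "1 + inner n m > 0" by simp
    define t where "t = (\<bar>inner (p - q) m\<bar> + 1) / (1 + inner n m)"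
    have t: "t > 0" "t * (1 + inner n m) = \<bar>inner (p - q) m\<bar> + 1" using a by (auto simp: t_def)
    define z where "z = p + t *\<^sub>R (n + m)"
    have "inner (z - p) n = t * (inner n n + inner m n)" by (simp add: z_def inner_add_left algebra_simps)
    also have "\<dots> = t * (1 + inner n m)" using nn by (simp add: inner_commute)
    finally have 1: "inner (z - p) n > 0" using t a by simp
    have "inner (z - q) m = inner (p - q) m + t * (inner n m + inner m m)"
      by (simp add: z_def inner_diff_left inner_add_left algebra_simps)
    also have "\<dots> = inner (p - q) m + \<bar>inner (p - q) m\<bar> + 1" using mm t by (simp add: algebra_simps)
    finally have 2: "inner (z - q) m > 0" by simp
    show False using td_disj[OF td, of z] 1 2 in_line by auto
  qed
qed



lemma self_rel: "valid_circ C \<Longrightarrow> W_row C 1 * W_row C 0 = (W_row C 2)^2 + (W_row C 3)^2 - 1"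
proof (cases C)
  case (Disk c r)
  moreover assume "valid_circ C"
  ultimately show ?thesis by (cases c) (simp add: Let_def field_simps power2_eq_square)
next
  case (Compl c r)
  moreover assume "valid_circ C"
  ultimately show ?thesis by (cases c) (simp add: Let_def field_simps power2_eq_square)
next
  case (Line n p)
  moreover assume "valid_circ C"
  ultimately show ?thesis by (cases n) simp
qed

definition rel :: "circ \<Rightarrow> circ \<Rightarrow> bool" where
  "rel C D \<longleftrightarrow> W_row C 1 * W_row D 0 + W_row D 1 * W_row C 0 = 2*(W_row C 2 * W_row D 2 + W_row C 3 * W_row D 3) + 2"

lemma rel_sym: "rel C D \<Longrightarrow> rel D C"
  unfolding rel_def by (simp add: algebra_simps)

lemma sqdist_pair: "sqdist (a1,a2) (b1,b2) = (a1-b1)^2 + (a2-b2)^2" by (simp add: sqdist_def)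

lemma circ_alg: fixes b1 b2 c1 c2 d1 d2 :: real
  assumes "b1 \<noteq> 0" "b2 \<noteq> 0" "(c1-d1)^2+(c2-d2)^2 = (1/b1+1/b2)^2"
  shows "b1*(b2*(d1^2+d2^2) - 1/b2) + b2*(b1*(c1^2+c2^2) - 1/b1) = 2*(b1* c1*(b2* d1) + b1* c2*(b2* d2)) + 2"
proof -
  have "b1*(b2*(d1^2+d2^2) - 1/b2) + b2*(b1*(c1^2+c2^2) - 1/b1) - (2*(b1* c1*(b2* d1) + b1* c2*(b2* d2)) + 2)
     = b1* b2*(((c1-d1)^2+(c2-d2)^2) - (1/b1+1/b2)^2)"
    using assms(1,2) by (simp add: field_simps power2_eq_square)
  also have "\<dots> = 0" using assms(3) by simp
  finally show ?thesis by simp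
qed

lemma DD_rel: assumes "r > 0" "s > 0" "tangent_disjoint (Disk c r) (Disk d s)"
  shows "rel (Disk c r) (Disk d s)"
proof -
  obtain c1 c2 d1 d2 where cd: "c = (c1,c2)" "d = (d1,d2)" by (cases c, cases d)
  have "sqdist c d = (r+s)^2" using DD_dist[OF assms] by (simp add: sqdist_eq)
  hence h: "(c1-d1)^2+(c2-d2)^2 = (r+s)^2" by (simp add: cd sqdist_pair)
  have "(c1-d1)^2+(c2-d2)^2 = (1/(1/r)+1/(1/s))^2" using h by simp
  from circ_alg[OF _ _ this] assms(1,2) show ?thesis unfolding rel_def cd by (simp add: Let_def)
qed

lemma DC_rel: assumes "r > 0" "R > 0" "tangent_disjoint (Disk c r) (Compl d R)"
  shows "rel (Disk c r) (Compl d R)"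
proof -
  obtain c1 c2 d1 d2 where cd: "c = (c1,c2)" "d = (d1,d2)" by (cases c, cases d)
  have "sqdist c d = (R-r)^2" using DC_dist[OF assms] by (simp add: sqdist_eq)
  hence h: "(c1-d1)^2+(c2-d2)^2 = (R-r)^2" by (simp add: cd sqdist_pair)
  have "(c1-d1)^2+(c2-d2)^2 = (1/(1/r)+1/(-1/R))^2" using h by (simp add: power2_eq_square algebra_simps)
  from circ_alg[OF _ _ this] assms(1,2) show ?thesis unfolding rel_def cd by (simp add: Let_def)
qed

lemma DL_rel: assumes "r > 0" "valid_circ (Line n p)" "tangent_disjoint (Disk c r) (Line n p)"
  shows "rel (Disk c r) (Line n p)"
proof -
  obtain c1 c2 n1 n2 p1 p2 where cd: "c = (c1,c2)" "n = (n1,n2)" "p = (p1,p2)" by (cases c, cases n, cases p)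
  have "inner (c - p) n = - r" using DL_h[OF assms(1) _ assms(3)] assms(2) by simp
  hence h: "(c1-p1)* n1 + (c2-p2)* n2 = - r" by (simp add: cd)
  have "p1* n1 + p2* n2 = c1* n1 + c2* n2 + r" using h by (simp add: algebra_simps)
  thus ?thesis using assms(1) unfolding rel_def cd by (simp add: Let_def field_simps)
qed

lemma LL_rel: assumes "valid_circ (Line n p)" "valid_circ (Line m q)" "tangent_disjoint (Line n p) (Line m q)"
  shows "rel (Line n p) (Line m q)"
proof -
  obtain n1 n2 m1 m2 where cd: "n = (n1,n2)" "m = (m1,m2)" by (cases n, cases m)
  have "inner n m = - 1" using LL_h[OF _ _ assms(3)] assms(1,2) by simp
  hence h: "n1* m1 + n2* m2 = - 1" by (simp add: cd)
  thus ?thesis unfolding rel_def cd by (simp add: algebra_simps)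
qed

lemma pair_rel: assumes "valid_circ C" "valid_circ D" "tangent_disjoint C D" shows "rel C D"
proof (cases C)
  case (Disk c r)
  show ?thesis
  proof (cases D)
    case (Disk d s) thus ?thesis using DD_rel assms \<open>C = _\<close> by simp
  next
    case (Compl d s) thus ?thesis using DC_rel assms \<open>C = _\<close> by simp
  next
    case (Line n p) thus ?thesis using DL_rel assms \<open>C = _\<close> by simp
  qed
next
  case (Compl c r)
  show ?thesis
  proof (cases D)
    case (Disk d s) thus ?thesis using DC_rel td_sym rel_sym assms \<open>C = _\<close> by simp
  next
    case (Compl d s)
    have False using CC_false[of r s c d] assms \<open>C = _\<close> \<open>D = _\<close> by simp
    thus ?thesis ..
  next
    case (Line n p)
    have False using CL_false[of r n c p] assms \<open>C = _\<close> \<open>D = _\<close> by simp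
    thus ?thesis ..
  qed
next
  case (Line n p)
  show ?thesis
  proof (cases D)
    case (Disk d s) thus ?thesis using DL_rel td_sym rel_sym assms \<open>C = _\<close> by simp
  next
    case (Compl d s)
    have False using CL_false[of s n d p] td_sym[OF assms(3)] assms \<open>C = _\<close> \<open>D = _\<close> by simp
    thus ?thesis ..
  next
    case (Line m q) thus ?thesis using LL_rel assms \<open>C = _\<close> by simp
  qed
qed



lemma MW: "j < 3 \<Longrightarrow> M_row C j = W_row C (Suc j)"
  by (cases C) (auto simp: Let_def less_Suc_eq numeral_3_eq_3)

lemma int_floor: "x \<in> \<int> \<Longrightarrow> of_int \<lfloor>x\<rfloor> = x"
  by (auto elim: Ints_cases)

theorem theorem8p2:
  fixes C :: "nat \<Rightarrow> circ" and pos :: bool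
  defines "M \<equiv> curv_center_matrix pos C"
  defines "W \<equiv> aug_curv_center_matrix pos C"
  defines "a \<equiv> (\<lambda>i. \<lfloor>M i 0\<rfloor>)"
  defines "g \<equiv> gcd (gcd (a 0) (a 1)) (gcd (a 2) (a 3))"
  assumes "descartes_config C"
  assumes "\<forall>i<4. \<forall>j<3. M i j \<in> \<int>"
  shows "(\<forall>i<4. \<forall>j<4. W i j \<in> \<int>) \<longleftrightarrow>
           (g = 1
          \<or> (g = 2 \<and> (\<forall>i<4. odd (\<lfloor>M i 1\<rfloor> + \<lfloor>M i 2\<rfloor>)))
          \<or> (g = 4 \<and> ((\<forall>i<4. odd \<lfloor>M i 1\<rfloor> \<and> even \<lfloor>M i 2\<rfloor>)
                     \<or> (\<forall>i<4. even \<lfloor>M i 1\<rfloor> \<and> odd \<lfloor>M i 2\<rfloor>))))"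
proof -
  define s where "s = orient_sign pos"
  have ss: "s * s = 1" by (simp add: s_def orient_sign_def)
  have valid: "valid_circ (C i)" if "i<4" for i using assms(5) that unfolding descartes_config_def by blast
  have td: "tangent_disjoint (C i) (C j)" if "i<4" "j<4" "i\<noteq>j" for i j
    using assms(5) that unfolding descartes_config_def by blast
  have Mij: "M i j = s * W_row (C i) (Suc j)" if "j<3" for i j
    unfolding M_def curv_center_matrix_def s_def using MW[OF that] by simp
  have Wij: "W i j = s * W_row (C i) j" for i j
    unfolding W_def aug_curv_center_matrix_def s_def by simp
  define X where "X i = \<lfloor>M i 1\<rfloor>" for i
  define Y where "Y i = \<lfloor>M i 2\<rfloor>" for i
  define bb where "bb i = W i 0" for i
  have Mint: "of_int \<lfloor>M i j\<rfloor> = M i j" if "i<4" "j<3" for i j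
  proof -
    have "M i j \<in> \<int>" using assms(6) that by blast
    thus ?thesis by (rule int_floor)
  qed
  have a_eq: "of_int (a i) = s * W_row (C i) 1" if "i<4" for i
    using Mint[OF that, of 0] Mij[of 0 i] unfolding a_def by simp
  have X_eq: "of_int (X i) = s * W_row (C i) 2" if "i<4" for i
    using Mint[OF that, of 1] Mij[of 1 i] unfolding X_def by (simp add: numeral_2_eq_2)
  have Y_eq: "of_int (Y i) = s * W_row (C i) 3" if "i<4" for i
    using Mint[OF that, of 2] Mij[of 2 i] unfolding Y_def by (simp add: numeral_3_eq_3)
  have R1: "of_int (a i) * bb i = of_int (X i^2+Y i^2-1)" if "i<4" for i
  proof -
    have "of_int (a i) * bb i = (s * s) * (W_row (C i) 1 * W_row (C i) 0)"
      unfolding a_eq[OF that] bb_def Wij by (simp add: algebra_simps)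
    also have "\<dots> = (s * s) * ((W_row (C i) 2)^2 + (W_row (C i) 3)^2) - 1"
      using self_rel[OF valid[OF that]] ss by simp
    also have "\<dots> = (of_int (X i))^2 + (of_int (Y i))^2 - 1"
      unfolding X_eq[OF that] Y_eq[OF that] by (simp add: algebra_simps power2_eq_square)
    finally show ?thesis by simp
  qed
  have R2: "of_int (a i) * bb j + of_int (a j) * bb i = of_int (2*(X i* X j+Y i* Y j)+2)"
    if "i<4" "j<4" "i\<noteq>j" for i j
  proof -
    have "of_int (a i) * bb j + of_int (a j) * bb i = (s * s) * (W_row (C i) 1 * W_row (C j) 0 + W_row (C j) 1 * W_row (C i) 0)"
      unfolding a_eq[OF that(1)] a_eq[OF that(2)] bb_def Wij by (simp add: algebra_simps)
    also have "\<dots> = (s * s) * (2*(W_row (C i) 2 * W_row (C j) 2 + W_row (C i) 3 * W_row (C j) 3)) + 2"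
      using pair_rel[OF valid[OF that(1)] valid[OF that(2)] td[OF that]] ss unfolding rel_def by simp
    also have "\<dots> = 2*(of_int (X i) * of_int (X j) + of_int (Y i) * of_int (Y j)) + 2"
      unfolding X_eq[OF that(1)] Y_eq[OF that(1)] X_eq[OF that(2)] Y_eq[OF that(2)] by (simp add: algebra_simps)
    finally show ?thesis by simp
  qed
  have main: "(\<forall>i<4. bb i \<in> \<int>) \<longleftrightarrow> (g = 1 \<or> (g=2 \<and> (\<forall>i<4. odd (X i + Y i)))
     \<or> (g=4 \<and> ((\<forall>i<4. odd (X i) \<and> even (Y i)) \<or> (\<forall>i<4. even (X i) \<and> odd (Y i)))))"
    unfolding g_def by (rule nt_main[OF R1 R2])
  have lhs: "(\<forall>i<4. \<forall>j<4. W i j \<in> \<int>) \<longleftrightarrow> (\<forall>i<4. bb i \<in> \<int>)"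
  proof
    assume "\<forall>i<4. \<forall>j<4. W i j \<in> \<int>" thus "\<forall>i<4. bb i \<in> \<int>" unfolding bb_def by simp
  next
    assume A: "\<forall>i<4. bb i \<in> \<int>"
    show "\<forall>i<4. \<forall>j<4. W i j \<in> \<int>"
    proof (intro allI impI)
      fix i j :: nat assume i: "i<4" and j: "j<4"
      show "W i j \<in> \<int>"
      proof (cases j)
        case 0 thus ?thesis using A i unfolding bb_def by simp
      next
        case (Suc k)
        hence "k < 3" using j by simp
        hence "W i j = M i k" using Mij[of k i] Wij[of i j] Suc by simp
        thus ?thesis using assms(6) i \<open>k<3\<close> by simp
      qed
    qed
  qed
  show ?thesis unfolding lhs main X_def Y_def ..
qed

end
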